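(* The two-dimensional subalgebras of ${\rm S}_1$ are exactly $\langle e_1,e_2\rangle$, $\langle e_2,e_3\rangle$ and $\langle e_1,\alpha e_2+e_3\rangle$ ($\alpha\in\mathbb{C}$). Up to automorphisms of ${\rm S}_1$, every two-dimensional subalgebra is equivalent to $\langle e_1,e_2\rangle$ or $\langle e_2,e_3\rangle$.
   Context: ${\rm S}_1$ is the complex algebra with basis $e_1,e_2,e_3$ whose only nonzero products of basis elements are $e_1e_i=e_ie_1=e_i$ ($i=1,2,3$). A subalgebra is a linear subspace closed under multiplication (it need not contain $e_1$). Equivalence up to automorphisms means one is mapped onto the other by an algebra automorphism. $\langle S\rangle$ denotes linear span. *)

theory Defs
  imports "HOL-Analysis.Analysis"
begin

text \<open>The algebra S_1: complex^3 with basis e1 e2 e3 (the standard axis vectors),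
  products e1 ei = ei e1 = ei, all other products of basis vectors zero (bilinear extension).\<close>

definition e1 :: "complex^3" where "e1 = axis 1 1"
definition e2 :: "complex^3" where "e2 = axis 2 1"
definition e3 :: "complex^3" where "e3 = axis 3 1"

definition S1_mult :: "complex^3 \<Rightarrow> complex^3 \<Rightarrow> complex^3" where
  "S1_mult x y = (\<chi> i. if i = 1 then x$1 * y$1 else x$1 * y$i + x$i * y$1)"

definition S1_subalgebra :: "(complex^3) set \<Rightarrow> bool" where
  "S1_subalgebra V \<longleftrightarrow> vec.subspace V \<and> (\<forall>x\<in>V. \<forall>y\<in>V. S1_mult x y \<in> V)"

definition S1_automorphism :: "(complex^3 \<Rightarrow> complex^3) \<Rightarrow> bool" where
  "S1_automorphism f \<longleftrightarrow> Vector_Spaces.linear (*s) (*s) f \<and> bij f \<and>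
     (\<forall>x y. f (S1_mult x y) = S1_mult (f x) (f y))"

end

theory Submission imports Defs begin
lemma span2: "vec.span {a, b} = {x. \<exists>s t. x = s *s a + t *s b}"
  unfolding vec.span_insert vec.span_singleton by (auto simp: algebra_simps)
lemma e_comps[simp]: "e1$1 = 1" "e1$2 = 0" "e1$3 = 0" "e2$1 = 0" "e2$2 = 1" "e2$3 = 0" "e3$1 = 0" "e3$2 = 0" "e3$3 = 1"
  by (simp_all add: e1_def e2_def e3_def axis_def)
lemma mult_comps[simp]: "S1_mult x y $ 1 = x$1 * y$1" "S1_mult x y $ 2 = x$1 * y$2 + x$2*y$1" "S1_mult x y $ 3 = x$1 * y$3 + x$3*y$1"
  by (simp_all add: S1_mult_def)
lemma vec3_eq: "(x::complex^3) = y \<longleftrightarrow> x$1 = y$1 \<and> x$2 = y$2 \<and> x$3 = y$3"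
  by (simp add: vec_eq_iff forall_3)
lemma mult_bilin: "S1_mult (s *s a + t *s b) (u *s a + v *s b) =
   (s * u) *s S1_mult a a + (s * v) *s S1_mult a b + (t * u) *s S1_mult b a + (t * v) *s S1_mult b b"
  by (simp add: vec3_eq algebra_simps)
lemma sub2:
  assumes "S1_mult a a \<in> vec.span {a,b}" "S1_mult a b \<in> vec.span {a,b}"
    "S1_mult b a \<in> vec.span {a,b}" "S1_mult b b \<in> vec.span {a,b}"
  shows "S1_subalgebra (vec.span {a,b})"
  unfolding S1_subalgebra_def
proof (intro conjI ballI)
  show "vec.subspace (vec.span {a, b})" by (rule vec.subspace_span)
  fix x y assume "x \<in> vec.span {a,b}" "y \<in> vec.span {a,b}"
  then obtain s t u v where "x = s *s a + t *s b" "y = u *s a + v *s b" unfolding span2 by auto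
  then have "S1_mult x y = (s * u) *s S1_mult a a + (s * v) *s S1_mult a b + (t * u) *s S1_mult b a + (t * v) *s S1_mult b b"
    by (simp add: mult_bilin)
  then show "S1_mult x y \<in> vec.span {a,b}" using assms
    by (simp add: vec.span_add vec.span_scale)
qed
lemma dim_e1: assumes "v$1 = 0" "v \<noteq> 0" shows "vec.dim (vec.span {e1, v}) = 2"
proof -
  have "v \<noteq> e1" using assms by auto
  have "e1 \<notin> vec.span {v}" unfolding vec.span_singleton using assms(1)
    by (auto simp: vec3_eq)
  moreover have "vec.independent {v}" using assms(2) by (simp add: vec.independent_insert vec3_eq)
  ultimately have "vec.independent {e1, v}" using \<open>v \<noteq> e1\<close> by (simp add: vec.independent_insert)
  then show ?thesis using \<open>v \<noteq> e1\<close> by (simp add: vec.dim_eq_card_independent)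
qed
lemma dim_e23: "vec.dim (vec.span {e2, e3}) = 2"
proof -
  have "e2 \<noteq> e3" by (auto simp: vec3_eq)
  have "e2 \<notin> vec.span {e3}" unfolding vec.span_singleton
    by (auto simp: vec3_eq)
  moreover have "vec.independent {e3}" by (simp add: vec.independent_insert vec3_eq)
  ultimately have "vec.independent {e2, e3}" by (simp add: vec.independent_insert)
  then show ?thesis using \<open>e2 \<noteq> e3\<close> by (simp add: vec.dim_eq_card_independent)
qed

lemma mult_e1[simp]: "S1_mult e1 x = x" "S1_mult x e1 = x"
  by (simp_all add: vec3_eq)
lemma mult_nil: "v$1 = 0 \<Longrightarrow> w$1 = 0 \<Longrightarrow> S1_mult v w = 0"
  by (simp add: vec3_eq)

lemma form_e1:
  assumes "v$1 = 0" "v \<noteq> 0"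
  shows "S1_subalgebra (vec.span {e1, v}) \<and> vec.dim (vec.span {e1, v}) = 2"
proof
  show "S1_subalgebra (vec.span {e1, v})"
    by (rule sub2) (simp_all add: mult_nil assms vec.span_base vec.span_zero)
  show "vec.dim (vec.span {e1, v}) = 2" by (rule dim_e1[OF assms])
qed

lemma form_e23: "S1_subalgebra (vec.span {e2, e3}) \<and> vec.dim (vec.span {e2, e3}) = 2"
proof
  show "S1_subalgebra (vec.span {e2, e3})"
    by (rule sub2) (simp_all add: mult_nil vec.span_zero)
  show "vec.dim (vec.span {e2, e3}) = 2" by (rule dim_e23)
qed

lemma W_eq: "vec.span {e2, e3} = {x. x$1 = 0}"
  unfolding span2
proof (safe)
  fix x :: "complex^3" assume "x$1 = 0"
  then have "x = (x$2) *s e2 + (x$3) *s e3" by (simp add: vec3_eq)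
  then show "\<exists>s t. x = s *s e2 + t *s e3" by blast
qed simp

lemma classify:
  assumes sub: "S1_subalgebra V" and dim: "vec.dim V = 2"
  shows "V = vec.span {e1, e2} \<or> V = vec.span {e2, e3} \<or>
             (\<exists>\<alpha>::complex. V = vec.span {e1, \<alpha> *s e2 + e3})"
proof -
  have sV: "vec.subspace V" and cl: "\<And>x y. x \<in> V \<Longrightarrow> y \<in> V \<Longrightarrow> S1_mult x y \<in> V"
    using sub unfolding S1_subalgebra_def by auto
  have eqV: "vec.span {e1, v} = V" if "v \<in> V" "e1 \<in> V" "v$1 = 0" "v \<noteq> 0" for v
  proof (rule vec.subspace_dim_equal[OF vec.subspace_span sV])
    show "vec.span {e1, v} \<subseteq> V" using that sV by (intro vec.span_minimal) auto
    show "vec.dim V \<le> vec.dim (vec.span {e1, v})" using dim dim_e1[OF that(3,4)] by simp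
  qed
  show ?thesis
  proof (cases "\<forall>x\<in>V. x$1 = 0")
    case True
    have "V = vec.span {e2, e3}"
    proof (rule vec.subspace_dim_equal[OF sV vec.subspace_span])
      show "V \<subseteq> vec.span {e2, e3}" using True W_eq by auto
      show "vec.dim (vec.span {e2, e3}) \<le> vec.dim V" using dim dim_e23 by simp
    qed
    then show ?thesis by simp
  next
    case False
    then obtain x where xV: "x \<in> V" and c: "x$1 \<noteq> 0" by auto
    define c where "c = x$1"
    have "e1 = (1/c) *s x - (1/c^2) *s (S1_mult x x - c *s x)"
      using c unfolding c_def by (simp add: vec3_eq field_simps power2_eq_square)
    moreover have "(1/c) *s x - (1/c^2) *s (S1_mult x x - c *s x) \<in> V"
      using xV cl sV by (intro vec.subspace_diff vec.subspace_scale) auto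
    ultimately have e1V: "e1 \<in> V" by simp
    have "\<not> V \<subseteq> vec.span {e1}"
    proof
      assume "V \<subseteq> vec.span {e1}"
      from vec.dim_le_card[OF this] dim show False by simp
    qed
    then obtain y where yV: "y \<in> V" and yn: "y \<notin> vec.span {e1}" by auto
    define m where "m = y - (y$1) *s e1"
    have mV: "m \<in> V" unfolding m_def using yV e1V sV
      by (intro vec.subspace_diff vec.subspace_scale) auto
    have m1: "m$1 = 0" unfolding m_def by simp
    have mnz: "m \<noteq> 0"
    proof
      assume "m = 0"
      then have "y = (y$1) *s e1" unfolding m_def by simp
      then have "y \<in> vec.span {e1}" by (metis vec.span_base vec.span_scale singletonI)
      with yn show False by simp
    qed
    show ?thesis
    proof (cases "m$3 = 0")
      case True
      then have "m$2 \<noteq> 0" using mnz m1 by (auto simp: vec3_eq)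
      have "e2 = (1/(m$2)) *s m" using True m1 \<open>m$2 \<noteq> 0\<close> by (simp add: vec3_eq)
      then have "e2 \<in> V" using mV sV by (metis vec.subspace_scale)
      from eqV[OF this e1V] have "V = vec.span {e1, e2}" by (simp add: vec3_eq)
      then show ?thesis by simp
    next
      case False
      define v where "v = (m$2/m$3) *s e2 + e3"
      have "v = (1/(m$3)) *s m" using False m1 unfolding v_def by (simp add: vec3_eq)
      then have "v \<in> V" using mV sV by (metis vec.subspace_scale)
      from eqV[OF this e1V] have "V = vec.span {e1, v}" unfolding v_def by (simp add: vec3_eq)
      then show ?thesis unfolding v_def by blast
    qed
  qed
qed

definition fa :: "complex \<Rightarrow> complex^3 \<Rightarrow> complex^3" where
  "fa a x = (\<chi> i. if i = 1 then x$1 else if i = 2 then x$3 else x$2 - a * x$3)"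
definition ga :: "complex \<Rightarrow> complex^3 \<Rightarrow> complex^3" where
  "ga a x = (\<chi> i. if i = 1 then x$1 else if i = 2 then x$3 + a * x$2 else x$2)"

lemma fa_comps[simp]: "fa a x $ 1 = x$1" "fa a x $ 2 = x$3" "fa a x $ 3 = x$2 - a * x$3"
  by (simp_all add: fa_def)
lemma ga_comps[simp]: "ga a x $ 1 = x$1" "ga a x $ 2 = x$3 + a * x$2" "ga a x $ 3 = x$2"
  by (simp_all add: ga_def)

lemma fa_lin: "Vector_Spaces.linear (*s) (*s) (fa a)"
  unfolding Vector_Spaces.linear_iff
  by (simp add: vec.vector_space_axioms vec3_eq algebra_simps)

lemma fa_auto: "S1_automorphism (fa a)"
  unfolding S1_automorphism_def
proof (intro conjI allI fa_lin)
  show "bij (fa a)"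
    by (rule o_bij[of "ga a"]) (simp_all add: fun_eq_iff vec3_eq)
  show "fa a (S1_mult x y) = S1_mult (fa a x) (fa a y)" for x y
    by (simp add: vec3_eq algebra_simps)
qed

lemma id_auto: "S1_automorphism id"
  unfolding S1_automorphism_def by (simp add: vec.linear_id)

lemma fa_img: "fa a ` vec.span {e1, a *s e2 + e3} = vec.span {e1, e2}"
proof -
  have "fa a e1 = e1" "fa a (a *s e2 + e3) = e2" by (simp_all add: vec3_eq)
  then have "fa a ` {e1, a *s e2 + e3} = {e1, e2}" by simp
  moreover have "vec.span (fa a ` {e1, a *s e2 + e3}) = fa a ` vec.span {e1, a *s e2 + e3}"
    by (rule vec.linear_span_image[OF fa_lin])
  ultimately show ?thesis by simp
qed

theorem mainTheorem15:
  shows "(\<forall>V. (S1_subalgebra V \<and> vec.dim V = 2) \<longleftrightarrow>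
            (V = vec.span {e1, e2} \<or> V = vec.span {e2, e3} \<or>
             (\<exists>\<alpha>::complex. V = vec.span {e1, \<alpha> *s e2 + e3})))
       \<and> (\<forall>V. S1_subalgebra V \<and> vec.dim V = 2 \<longrightarrow>
            (\<exists>f. S1_automorphism f \<and> (f ` V = vec.span {e1, e2} \<or> f ` V = vec.span {e2, e3})))"
proof (rule conjI)
  show "\<forall>V. (S1_subalgebra V \<and> vec.dim V = 2) \<longleftrightarrow>
            (V = vec.span {e1, e2} \<or> V = vec.span {e2, e3} \<or>
             (\<exists>\<alpha>::complex. V = vec.span {e1, \<alpha> *s e2 + e3}))"
  proof (rule allI, rule iffI)
  fix V assume "S1_subalgebra V \<and> vec.dim V = 2"
  then show "V = vec.span {e1, e2} \<or> V = vec.span {e2, e3} \<or>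
             (\<exists>\<alpha>::complex. V = vec.span {e1, \<alpha> *s e2 + e3})" using classify by blast
next
  fix V assume "V = vec.span {e1, e2} \<or> V = vec.span {e2, e3} \<or>
             (\<exists>\<alpha>::complex. V = vec.span {e1, \<alpha> *s e2 + e3})"
  moreover have "S1_subalgebra (vec.span {e1, e2}) \<and> vec.dim (vec.span {e1, e2}) = 2"
    by (rule form_e1) (simp_all add: vec3_eq)
  moreover have "S1_subalgebra (vec.span {e1, a *s e2 + e3}) \<and> vec.dim (vec.span {e1, a *s e2 + e3}) = 2" for a
    by (rule form_e1) (simp_all add: vec3_eq)
  ultimately show "S1_subalgebra V \<and> vec.dim V = 2" using form_e23 by blast
  qed
next
  show "\<forall>V. S1_subalgebra V \<and> vec.dim V = 2 \<longrightarrow>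
            (\<exists>f. S1_automorphism f \<and> (f ` V = vec.span {e1, e2} \<or> f ` V = vec.span {e2, e3}))"
  proof (intro allI impI)
  fix V assume "S1_subalgebra V \<and> vec.dim V = 2"
  then have "V = vec.span {e1, e2} \<or> V = vec.span {e2, e3} \<or>
             (\<exists>\<alpha>::complex. V = vec.span {e1, \<alpha> *s e2 + e3})" using classify by blast
  then show "\<exists>f. S1_automorphism f \<and> (f ` V = vec.span {e1, e2} \<or> f ` V = vec.span {e2, e3})"
  proof (elim disjE exE)
    assume "V = vec.span {e1, e2}" then show ?thesis by (intro exI[of _ id]) (simp add: id_auto)
  next
    assume "V = vec.span {e2, e3}" then show ?thesis by (intro exI[of _ id]) (simp add: id_auto)
  next
    fix a assume "V = vec.span {e1, a *s e2 + e3}" then show ?thesis using fa_auto fa_img by metis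
  qed
  qed
qed

end
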